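(* Let $n\ge 2$ be an integer, $k=3$ and $\alpha=(\tfrac12,\tfrac12,\tfrac1n)$. Let $f(g)$ be the number of $\alpha$-communal triples with entries summing to $g$. Then \[ f(g)=\tfrac12\left(\lfloor g/n\rfloor+1\right)\left(\lfloor g/n\rfloor+\epsilon_g\right),\quad \epsilon_g=\begin{cases}2 & g \text{ even},\\ 0 & g\text{ odd},\end{cases} \] and the generating function $F(x)=\sum_{g\ge0}f(g)x^g$ is \[ F(x)=\frac{1+2x^{n+1}+x^{2n}}{(1-x^2)(1-x^n)(1-x^{2n})}\ \text{ if } n \text{ is odd},\qquad F(x)=\frac{1+x^{n+1}}{(1-x^2)(1-x^n)^2}\ \text{ if } n\text{ is even}. \]
   Context: A triple $[g_1,g_2,g_3]$ of integers is $\alpha$-communal if $0\le g_i\le\alpha_i(g_1+g_2+g_3)$ for $i=1,2,3$. *)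

theory Defs
  imports Complex_Main "HOL-Computational_Algebra.Formal_Power_Series"
begin

definition communal :: "real \<times> real \<times> real \<Rightarrow> int \<times> int \<times> int \<Rightarrow> bool" where
  "communal \<alpha> t \<longleftrightarrow>
     (case \<alpha> of (a1, a2, a3) \<Rightarrow> case t of (g1, g2, g3) \<Rightarrow>
        0 \<le> g1 \<and> real_of_int g1 \<le> a1 * real_of_int (g1 + g2 + g3) \<and>
        0 \<le> g2 \<and> real_of_int g2 \<le> a2 * real_of_int (g1 + g2 + g3) \<and>
        0 \<le> g3 \<and> real_of_int g3 \<le> a3 * real_of_int (g1 + g2 + g3))"

definition communal_count :: "real \<times> real \<times> real \<Rightarrow> int \<Rightarrow> nat" where
  "communal_count \<alpha> g =
     card {t. communal \<alpha> t \<and> (case t of (g1, g2, g3) \<Rightarrow> g1 + g2 + g3 = g)}"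

end

theory Submission imports Defs begin

lemma count_set:
  fixes n g :: nat
  assumes n: "n \<ge> 2"
  shows "{t. communal (1/2, 1/2, 1 / real n) t \<and> (case t of (g1, g2, g3) \<Rightarrow> g1 + g2 + g3 = int g)}
    = (\<lambda>(t,a). (a, int g - int t - a, int t)) ` (SIGMA t:{0..g div n}. {int g - int t - int (g div 2) .. int (g div 2)})"
proof -
  have npos: "real n > 0" using n by simp
  have key3: "\<And>c::int. (real_of_int c \<le> 1 / real n * real g) \<longleftrightarrow> c * int n \<le> int g"
  proof -
    fix c :: int
    have "(real_of_int c \<le> 1 / real n * real g) \<longleftrightarrow> real_of_int c * real n \<le> real g"
      using npos by (simp add: field_simps)
    also have "\<dots> \<longleftrightarrow> c * int n \<le> int g"
      by (metis of_int_le_iff of_int_mult of_int_of_nat_eq)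
    finally show "?thesis c" .
  qed
  have key2: "\<And>c::int. (real_of_int c \<le> 1 / 2 * real g) \<longleftrightarrow> c \<le> int (g div 2)"
  proof -
    fix c :: int
    have "(real_of_int c \<le> 1 / 2 * real g) \<longleftrightarrow> 2 * c \<le> int g" by linarith
    also have "\<dots> \<longleftrightarrow> c \<le> int (g div 2)" unfolding zdiv_int by simp presburger
    finally show "?thesis c" .
  qed
  have key4: "\<And>c::int. 0 \<le> c \<Longrightarrow> c * int n \<le> int g \<longleftrightarrow> nat c \<le> g div n"
  proof -
    fix c :: int assume "0 \<le> c"
    then obtain k where k: "c = int k" by (metis nonneg_eq_int)
    have "k * n \<le> g \<longleftrightarrow> k \<le> g div n" using n by (simp add: less_eq_div_iff_mult_less_eq)
    then show "c * int n \<le> int g \<longleftrightarrow> nat c \<le> g div n" using k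
      by (metis nat_int of_nat_le_iff of_nat_mult)
  qed
  show ?thesis
  proof (rule set_eqI, rule iffI)
    fix x assume "x \<in> {t. communal (1/2, 1/2, 1 / real n) t \<and> (case t of (g1, g2, g3) \<Rightarrow> g1 + g2 + g3 = int g)}"
    then obtain a b c where x: "x = (a,b,c)" and h: "communal (1/2, 1/2, 1 / real n) (a,b,c)" "a+b+c = int g"
      by (cases x) auto
    from h have h2: "0 \<le> a" "a \<le> int (g div 2)" "0 \<le> b" "b \<le> int (g div 2)" "0 \<le> c" "c * int n \<le> int g"
    proof -
      have "0 \<le> a \<and> real_of_int a \<le> 1/2 * real g \<and> 0 \<le> b \<and> real_of_int b \<le> 1/2 * real g
          \<and> 0 \<le> c \<and> real_of_int c \<le> 1 / real n * real g"
        using h(1) unfolding communal_def prod.case h(2) of_int_of_nat_eq .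
      then show "0 \<le> a" "a \<le> int (g div 2)" "0 \<le> b" "b \<le> int (g div 2)" "0 \<le> c" "c * int n \<le> int g"
        using key2 key3 by blast+
    qed
    have "nat c \<le> g div n" using key4 h2 by auto
    then show "x \<in> (\<lambda>(t,a). (a, int g - int t - a, int t)) ` (SIGMA t:{0..g div n}. {int g - int t - int (g div 2) .. int (g div 2)})"
      using h2 h(2) x
      by (auto intro!: image_eqI[where x="(nat c, a)"])
  next
    fix x assume "x \<in> (\<lambda>(t,a). (a, int g - int t - a, int t)) ` (SIGMA t:{0..g div n}. {int g - int t - int (g div 2) .. int (g div 2)})"
    then obtain t a where x: "x = (a, int g - int t - a, int t)" and t: "t \<le> g div n"
       and a: "int g - int t - int (g div 2) \<le> a" "a \<le> int (g div 2)" by auto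
    have c: "int t * int n \<le> int g" using key4[of "int t"] t by simp
    have "int t \<le> int g" proof -
      have "int t \<le> int t * int n" using n by (simp add: mult_le_cancel_left1)
      then show ?thesis using c by linarith
    qed
    have "2 * t \<le> t * n" using n by (simp add: mult.commute)
    then have "2 * int t \<le> int t * int n" by (metis of_nat_le_iff of_nat_mult of_nat_numeral)
    then have t2: "2 * int t \<le> int g" using c by linarith
    have h2: "2 * int (g div 2) \<le> int g" by linarith
    have "0 \<le> a" using a t2 h2 by linarith
    then show "x \<in> {t. communal (1/2, 1/2, 1 / real n) t \<and> (case t of (g1, g2, g3) \<Rightarrow> g1 + g2 + g3 = int g)}"
    proof -
      have s: "a + (int g - int t - a) + int t = int g" by simp
      have "0 \<le> a \<and> real_of_int a \<le> 1/2 * real g \<and> 0 \<le> (int g - int t - a) \<and> real_of_int (int g - int t - a) \<le> 1/2 * real g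
          \<and> 0 \<le> int t \<and> real_of_int (int t) \<le> 1 / real n * real g"
      proof (intro conjI)
        show "real_of_int a \<le> 1/2 * real g" using key2 a(2) by blast
        show "real_of_int (int g - int t - a) \<le> 1/2 * real g" proof -
          have "int g - int t - a \<le> int (g div 2)" using a(1) by linarith
          then show ?thesis using key2 by blast
        qed
        show "real_of_int (int t) \<le> 1 / real n * real g" using key3 c by blast
        show "0 \<le> int g - int t - a" using a t2 h2 by linarith
      qed (use \<open>0 \<le> a\<close> in auto)
      then show ?thesis unfolding x mem_Collect_eq communal_def prod.case s of_int_of_nat_eq by simp
    qed
  qed
qed


lemma count_sum:
  fixes n g :: nat
  assumes n: "n \<ge> 2"
  shows "communal_count (1/2, 1/2, 1 / real n) (int g) = (\<Sum>t\<in>{0..g div n}. t + (if even g then 1 else 0))"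
proof -
  have inj: "inj_on (\<lambda>(t,a). (a, int g - int t - a, int t)) (SIGMA t:{0..g div n}. {int g - int t - int (g div 2) .. int (g div 2)})"
    by (auto simp: inj_on_def)
  have "communal_count (1/2, 1/2, 1 / real n) (int g)
      = card (SIGMA t:{0..g div n}. {int g - int t - int (g div 2) .. int (g div 2)})"
    unfolding communal_count_def count_set[OF n] using card_image[OF inj] .
  also have "\<dots> = (\<Sum>t\<in>{0..g div n}. card {int g - int t - int (g div 2) .. int (g div 2)})"
    by (rule card_SigmaI) auto
  also have "\<dots> = (\<Sum>t\<in>{0..g div n}. t + (if even g then 1 else 0))"
  proof (rule sum.cong[OF refl])
    fix t assume "t \<in> {0..g div n}"
    have "int (g div 2) - (int g - int t - int (g div 2)) + 1 = int t + (if even g then 1 else 0)"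
      by (cases "even g") (auto elim!: evenE oddE)
    note E = this
    have "nat (int (g div 2) - (int g - int t - int (g div 2)) + 1) = t + (if even g then 1 else 0)"
      unfolding E by (cases "even g") auto
    then show "card {int g - int t - int (g div 2) .. int (g div 2)} = t + (if even g then 1 else 0)"
      by (simp only: card_atLeastAtMost_int)
  qed
  finally show ?thesis .
qed

lemma sum_formula:
  "real (\<Sum>t\<in>{0..M::nat}. t + c) = 1/2 * (real M + 1) * (real M + 2 * real c)"
  by (induction M) (auto simp: field_simps)

lemma f_formula:
  fixes n g :: nat
  assumes n: "n \<ge> 2"
  shows "real (communal_count (1/2, 1/2, 1 / real n) (int g)) =
     1/2 * (real (g div n) + 1) * (real (g div n) + (if even g then 2 else 0))"
  unfolding count_sum[OF n] sum_formula by simp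


definition FF :: "nat \<Rightarrow> nat \<Rightarrow> real" where
  "FF n g = 1/2 * (real (g div n) + 1) * (real (g div n) + (if even g then 2 else 0))"

lemma shift_fps:
  fixes a :: "nat \<Rightarrow> real"
  shows "(1 - fps_X ^ k) * Abs_fps a = Abs_fps (\<lambda>g. a g - (if k \<le> g then a (g - k) else 0))"
  by (simp add: fps_eq_iff left_diff_distrib fps_X_power_mult_nth not_le)

lemma div_shift:
  fixes n g :: nat
  assumes "n \<ge> 1" "n \<le> g"
  shows "g div n = Suc ((g - n) div n)"
  using assms le_div_geq by auto

lemma odd_step1:
  fixes n :: nat assumes n: "n \<ge> 2" "odd n"
  shows "FF n g - (if n \<le> g then FF n (g - n) else 0) = (if even g then 2 * real (g div n) + 1 else 0)"
proof (cases "n \<le> g")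
  case True
  define q where "q = (g - n) div n"
  have d: "g div n = Suc q" unfolding q_def using div_shift[OF _ True] n by simp
  have p: "even (g - n) \<longleftrightarrow> odd g" using n True by auto
  show ?thesis using True unfolding FF_def d q_def[symmetric] using p
    by (cases "even g") (simp_all add: field_simps)
next
  case False
  then have "g div n = 0" by simp
  then show ?thesis using False unfolding FF_def by simp
qed

lemma odd_step2:
  fixes n :: nat assumes n: "n \<ge> 2" "odd n"
  defines "h \<equiv> \<lambda>g::nat. (if even g then 2 * real (g div n) + 1 else 0)"
  shows "h g - (if 2 * n \<le> g then h (g - 2 * n) else 0) =
    (if even g then (if g < n then 1 else if g < 2 * n then 3 else 4) else 0)"
proof (cases "2 * n \<le> g")
  case True
  define q where "q = (g - 2 * n) div n"
  have d1: "g div n = Suc ((g - n) div n)" using div_shift[of n g] n True by simp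
  have d2: "(g - n) div n = Suc q" unfolding q_def using div_shift[of n "g - n"] n True
    by (simp add: diff_diff_add mult_2)
  have p: "even (g - 2 * n) \<longleftrightarrow> even g" using True by auto
  show ?thesis using True n unfolding h_def d1 d2 q_def[symmetric] using p
    by (cases "even g") simp_all
next
  case False
  show ?thesis
  proof (cases "g < n")
    case True
    then show ?thesis using False unfolding h_def by simp
  next
    case F2: False
    then have "g div n = 1" using False div_shift[of n g] n
      by (simp add: div_less)
    then show ?thesis using False F2 unfolding h_def by simp
  qed
qed

lemma odd_step3:
  fixes n :: nat assumes n: "n \<ge> 2" "odd n"
  defines "h \<equiv> \<lambda>g::nat. (if even g then (if g < n then 1 else if g < 2 * n then 3 else 4) else (0::real))"
  shows "h g - (if 2 \<le> g then h (g - 2) else 0) =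
    (if g = 0 then 1 else 0) + 2 * (if g = n + 1 then 1 else 0) + (if g = 2 * n then 1 else 0)"
proof -
  have n3: "n \<ge> 3" using n by presburger
  consider "g = 0" | "g = 1" | "g \<ge> 2" by linarith
  then show ?thesis
  proof cases
    case 3
    have e: "even (g - 2) \<longleftrightarrow> even g" using 3 by auto
    show ?thesis unfolding h_def using 3 n n3 e
      by (cases "even g") (auto, presburger+)
  qed (use n in \<open>auto simp: h_def\<close>)
qed


lemma even_step1:
  fixes n :: nat assumes n: "n \<ge> 2" "even n"
  shows "FF n g - (if n \<le> g then FF n (g - n) else 0) = (if even g then real (g div n) + 1 else real (g div n))"
proof (cases "n \<le> g")
  case True
  define q where "q = (g - n) div n"
  have d: "g div n = Suc q" unfolding q_def using div_shift[OF _ True] n by simp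
  have p: "even (g - n) \<longleftrightarrow> even g" using n True by auto
  show ?thesis using True unfolding FF_def d q_def[symmetric] using p
    by (cases "even g") (simp_all add: field_simps)
next
  case False
  then have "g div n = 0" by simp
  then show ?thesis using False unfolding FF_def by simp
qed

lemma even_step2:
  fixes n :: nat assumes n: "n \<ge> 2" "even n"
  defines "h \<equiv> \<lambda>g::nat. (if even g then real (g div n) + 1 else real (g div n))"
  shows "h g - (if n \<le> g then h (g - n) else 0) = (if even g \<or> n \<le> g then 1 else 0)"
proof (cases "n \<le> g")
  case True
  have d: "g div n = Suc ((g - n) div n)" using div_shift[OF _ True] n by simp
  have p: "even (g - n) \<longleftrightarrow> even g" using n True by auto
  show ?thesis using True unfolding h_def d using p
    by (cases "even g") simp_all
next
  case False
  then have "g div n = 0" by simp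
  then show ?thesis using False unfolding h_def by simp
qed

lemma even_step3:
  fixes n :: nat assumes n: "n \<ge> 2" "even n"
  defines "h \<equiv> \<lambda>g::nat. (if even g \<or> n \<le> g then 1 else (0::real))"
  shows "h g - (if 2 \<le> g then h (g - 2) else 0) =
    (if g = 0 then 1 else 0) + (if g = n + 1 then 1 else 0)"
proof -
  consider "g = 0" | "g = 1" | "g \<ge> 2" by linarith
  then show ?thesis
  proof cases
    case 3
    have e: "even (g - 2) \<longleftrightarrow> even g" using 3 by auto
    show ?thesis unfolding h_def using 3 n e
      by (cases "even g") (auto, presburger+)
  qed (use n in \<open>auto simp: h_def\<close>)
qed

lemma div_eq_from_mult:
  fixes A D N :: "real fps"
  assumes "A * D = N" "fps_nth D 0 \<noteq> 0"
  shows "A = N / D"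
proof -
  have "D \<noteq> 0" using assms(2) by auto
  then show ?thesis using assms(1) by (metis nonzero_mult_div_cancel_right)
qed

theorem mainTheorem11:
  fixes n :: nat
  assumes "n \<ge> 2"
  defines "f \<equiv> (\<lambda>g::nat. communal_count (1/2, 1/2, 1 / real n) (int g))"
  shows "(\<forall>g::nat. real (f g) =
            1/2 * (real (g div n) + 1) * (real (g div n) + (if even g then 2 else 0)))
       \<and> (odd n \<longrightarrow> Abs_fps (\<lambda>g. real (f g)) =
            (1 + 2 * fps_X ^ (n + 1) + fps_X ^ (2 * n)) /
            ((1 - fps_X ^ 2) * (1 - fps_X ^ n) * (1 - fps_X ^ (2 * n))))
       \<and> (even n \<longrightarrow> Abs_fps (\<lambda>g. real (f g)) =
            (1 + fps_X ^ (n + 1)) / ((1 - fps_X ^ 2) * (1 - fps_X ^ n) ^ 2))"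
proof -
  have fF: "(\<lambda>g. real (f g)) = FF n" using f_formula[OF assms(1)] unfolding f_def FF_def by auto
  have odd_part: "Abs_fps (FF n) =
            (1 + 2 * fps_X ^ (n + 1) + fps_X ^ (2 * n)) /
            ((1 - fps_X ^ 2) * (1 - fps_X ^ n) * (1 - fps_X ^ (2 * n)))" if on: "odd n"
  proof (rule div_eq_from_mult)
    have "Abs_fps (FF n) * ((1 - fps_X ^ 2) * (1 - fps_X ^ n) * (1 - fps_X ^ (2 * n)))
        = (1 - fps_X ^ 2) * ((1 - fps_X ^ (2 * n)) * ((1 - fps_X ^ n) * Abs_fps (FF n)))"
      by (simp only: ac_simps)
    also have "(1 - fps_X ^ n) * Abs_fps (FF n) = Abs_fps (\<lambda>g. (if even g then 2 * real (g div n) + 1 else 0))"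
      unfolding shift_fps using odd_step1[OF assms(1) on] by simp
    also have "(1 - fps_X ^ (2 * n)) * \<dots> = Abs_fps (\<lambda>g. (if even g then (if g < n then 1 else if g < 2 * n then 3 else 4) else (0::real)))"
      unfolding shift_fps using odd_step2[OF assms(1) on] by simp
    also have "(1 - fps_X ^ 2) * \<dots> = Abs_fps (\<lambda>g. (if g = 0 then 1 else 0) + 2 * (if g = n + 1 then 1 else 0) + (if g = 2 * n then 1 else (0::real)))"
      unfolding shift_fps using odd_step3[OF assms(1) on] by simp
    also have "\<dots> = 1 + 2 * fps_X ^ (n + 1) + fps_X ^ (2 * n)"
      by (simp only: fps_eq_iff mult_2 fps_add_nth fps_nth_Abs_fps fps_X_power_nth fps_one_nth) auto
    finally show "Abs_fps (FF n) * ((1 - fps_X ^ 2) * (1 - fps_X ^ n) * (1 - fps_X ^ (2 * n))) =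
        1 + 2 * fps_X ^ (n + 1) + fps_X ^ (2 * n)" .
    show "fps_nth (((1 - fps_X ^ 2) * (1 - fps_X ^ n) * (1 - fps_X ^ (2 * n))) :: real fps) 0 \<noteq> 0"
      using assms(1) by simp
  qed
  have even_part: "Abs_fps (FF n) =
            (1 + fps_X ^ (n + 1)) / ((1 - fps_X ^ 2) * (1 - fps_X ^ n) ^ 2)" if en: "even n"
  proof (rule div_eq_from_mult)
    have "Abs_fps (FF n) * ((1 - fps_X ^ 2) * (1 - fps_X ^ n) ^ 2)
        = (1 - fps_X ^ 2) * ((1 - fps_X ^ n) * ((1 - fps_X ^ n) * Abs_fps (FF n)))"
      by (simp only: ac_simps power2_eq_square)
    also have "(1 - fps_X ^ n) * Abs_fps (FF n) = Abs_fps (\<lambda>g. (if even g then real (g div n) + 1 else real (g div n)))"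
      unfolding shift_fps using even_step1[OF assms(1) en] by simp
    also have "(1 - fps_X ^ n) * \<dots> = Abs_fps (\<lambda>g. (if even g \<or> n \<le> g then 1 else (0::real)))"
      unfolding shift_fps using even_step2[OF assms(1) en] by simp
    also have "(1 - fps_X ^ 2) * \<dots> = Abs_fps (\<lambda>g. (if g = 0 then 1 else 0) + (if g = n + 1 then 1 else (0::real)))"
      unfolding shift_fps using even_step3[OF assms(1) en] by simp
    also have "\<dots> = 1 + fps_X ^ (n + 1)"
      by (simp only: fps_eq_iff fps_add_nth fps_nth_Abs_fps fps_X_power_nth fps_one_nth) auto
    finally show "Abs_fps (FF n) * ((1 - fps_X ^ 2) * (1 - fps_X ^ n) ^ 2) = 1 + fps_X ^ (n + 1)" .
    show "fps_nth (((1 - fps_X ^ 2) * (1 - fps_X ^ n) ^ 2) :: real fps) 0 \<noteq> 0"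
      using assms(1) by simp
  qed
  have all: "\<forall>g::nat. real (f g) =
            1/2 * (real (g div n) + 1) * (real (g div n) + (if even g then 2 else 0))"
    using fF unfolding FF_def by metis
  show ?thesis using all odd_part even_part unfolding fF by blast
qed

end
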